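(* Let $r>1$ and let $k,\ell,m$ be positive integers with $k\ge 2$. Choose $x_0$ uniformly at random from the vertex set of the $(k,\ell,m)$-metafunnel and run the Moran process with fitness $r$ on it with initial mutant $x_0$. Then the extinction probability is at least $1/(2(m+r))$.
   Context: Moran process: given a directed graph $G$ and fitness $r$, one vertex $x_0$ is a mutant, the rest non-mutants. At each step a vertex $v$ is chosen with probability proportional to fitness (mutants $r$, non-mutants $1$), an out-neighbour $w$ of $v$ is chosen uniformly at random and the state of $v$ is copied to $w$. Extinction: eventually no vertex is a mutant. The $(k,\ell,m)$-metafunnel has vertex set $V_0\cup V_1\cup\dots\cup V_k$ (disjoint), where $V_0=\{v^*\}$ and for $i\in[k]$, $V_i$ is the disjoint union of sets $V_{i,1},\dots,V_{i,\ell}$ each of size $m^i$; its edge set is $(V_0\times V_k)\cup(V_1\times V_0)\cup\bigcup_{i\in[k-1]}\bigcup_{j\in[\ell]}(V_{i+1,j}\times V_{i,j})$. *)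

theory Defs
  imports Complex_Main
begin

text \<open>Moran process on a directed graph with finite vertex set V and edge set E
  (pairs (v,w) meaning an edge from v to w). States are sets of mutants.\<close>

definition out_nbrs :: "('a \<times> 'a) set \<Rightarrow> 'a \<Rightarrow> 'a set" where
  "out_nbrs E v = {w. (v, w) \<in> E}"

definition fitness :: "real \<Rightarrow> 'a set \<Rightarrow> 'a \<Rightarrow> real" where
  "fitness r S v = (if v \<in> S then r else 1)"

definition total_fitness :: "'a set \<Rightarrow> real \<Rightarrow> 'a set \<Rightarrow> real" where
  "total_fitness V r S = (\<Sum>v\<in>V. fitness r S v)"

definition moran_update :: "'a set \<Rightarrow> 'a \<Rightarrow> 'a \<Rightarrow> 'a set" where
  "moran_update S v w = (if v \<in> S then insert w S else S - {w})"

text \<open>A vertex with no out-neighbours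
  (does not occur in the metafunnel) leaves the state unchanged when chosen.\<close>
fun ext_within :: "'a set \<Rightarrow> ('a \<times> 'a) set \<Rightarrow> real \<Rightarrow> nat \<Rightarrow> 'a set \<Rightarrow> real" where
  "ext_within V E r 0 S = (if S = {} then 1 else 0)"
| "ext_within V E r (Suc n) S =
     (if S = {} then 1 else
        (\<Sum>v\<in>V. (fitness r S v / total_fitness V r S) *
           (if out_nbrs E v = {} then ext_within V E r n S
            else (\<Sum>w\<in>out_nbrs E v. ext_within V E r n (moran_update S v w)
                    / real (card (out_nbrs E v))))))"

definition extinction_prob :: "'a set \<Rightarrow> ('a \<times> 'a) set \<Rightarrow> real \<Rightarrow> 'a set \<Rightarrow> real" where
  "extinction_prob V E r S = (SUP n. ext_within V E r n S)"

definition uniform_extinction_prob :: "'a set \<Rightarrow> ('a \<times> 'a) set \<Rightarrow> real \<Rightarrow> real" where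
  "uniform_extinction_prob V E r =
     (\<Sum>x\<in>V. extinction_prob V E r {x}) / real (card V)"

text \<open>(k,l,m)-metafunnel. Vertex (0,0,0) is v*; vertex (i,j,t) with 1<=i<=k,
  1<=j<=l, t<m^i belongs to V_{i,j}.\<close>
definition mf_part :: "nat \<Rightarrow> nat \<Rightarrow> nat \<Rightarrow> (nat \<times> nat \<times> nat) set" where
  "mf_part m i j = {(i, j, t) | t. t < m ^ i}"

definition mf_level :: "nat \<Rightarrow> nat \<Rightarrow> nat \<Rightarrow> (nat \<times> nat \<times> nat) set" where
  "mf_level l m i = (\<Union>j\<in>{1..l}. mf_part m i j)"

definition metafunnel_V :: "nat \<Rightarrow> nat \<Rightarrow> nat \<Rightarrow> (nat \<times> nat \<times> nat) set" where
  "metafunnel_V k l m = {(0, 0, 0)} \<union> (\<Union>i\<in>{1..k}. mf_level l m i)"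

definition metafunnel_E :: "nat \<Rightarrow> nat \<Rightarrow> nat \<Rightarrow> ((nat \<times> nat \<times> nat) \<times> (nat \<times> nat \<times> nat)) set" where
  "metafunnel_E k l m =
     ({(0, 0, 0)} \<times> mf_level l m k) \<union> (mf_level l m 1 \<times> {(0, 0, 0)}) \<union>
     (\<Union>i\<in>{1..k - 1}. \<Union>j\<in>{1..l}. mf_part m (i + 1) j \<times> mf_part m i j)"

end

theory Submission
  imports Defs
begin

lemma ext_empty[simp]: "ext_within V E r n {} = 1"
  by (cases n) auto

lemma tf_pos: assumes "finite V" "V \<noteq> {}" "r > 0" shows "total_fitness V r S > 0"
  unfolding total_fitness_def using assms by (intro sum_pos) (auto simp: fitness_def)

lemma avg_bounds:
  fixes f :: "'b \<Rightarrow> real"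
  assumes "finite A" "\<And>w. w \<in> A \<Longrightarrow> 0 \<le> f w \<and> f w \<le> 1"
  shows "0 \<le> (\<Sum>w\<in>A. f w / real (card A)) \<and> (\<Sum>w\<in>A. f w / real (card A)) \<le> 1"
proof -
  have e: "(\<Sum>w\<in>A. f w / real (card A)) = (\<Sum>w\<in>A. f w) / real (card A)"
    by (simp add: sum_divide_distrib)
  have "(\<Sum>w\<in>A. f w) \<le> (\<Sum>w\<in>A. 1)" using assms by (intro sum_mono) auto
  hence le: "(\<Sum>w\<in>A. f w) \<le> real (card A)" by simp
  have ge: "0 \<le> (\<Sum>w\<in>A. f w)" using assms by (intro sum_nonneg) auto
  show ?thesis
  proof (cases "card A = 0")
    case True thus ?thesis by (simp add: e)
  next
    case False thus ?thesis using le ge by (simp add: e divide_le_eq_1)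
  qed
qed

lemma ext_bounds:
  assumes "finite V" "V \<noteq> {}" "r > 0" "\<And>v. finite (out_nbrs E v)"
  shows "0 \<le> ext_within V E r n S \<and> ext_within V E r n S \<le> 1"
proof (induction n arbitrary: S)
  case 0 thus ?case by simp
next
  case (Suc n)
  show ?case
  proof (cases "S = {}")
    case True thus ?thesis by simp
  next
    case False
    define T where "T = total_fitness V r S"
    have T: "T > 0" unfolding T_def using tf_pos assms by blast
    define inn where "inn v = (if out_nbrs E v = {} then ext_within V E r n S
            else (\<Sum>w\<in>out_nbrs E v. ext_within V E r n (moran_update S v w)
                    / real (card (out_nbrs E v))))" for v
    have inn: "0 \<le> inn v \<and> inn v \<le> 1" for v
    proof (cases "out_nbrs E v = {}")
      case True thus ?thesis using Suc.IH by (simp add: inn_def)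
    next
      case False
      have "0 \<le> (\<Sum>w\<in>out_nbrs E v. ext_within V E r n (moran_update S v w)
                    / real (card (out_nbrs E v))) \<and> (\<Sum>w\<in>out_nbrs E v. ext_within V E r n (moran_update S v w)
                    / real (card (out_nbrs E v))) \<le> 1"
        by (rule avg_bounds[OF assms(4)]) (rule Suc.IH)
      thus ?thesis using False by (simp add: inn_def)
    qed
    have fp: "0 < fitness r S v" for v using assms(3) by (simp add: fitness_def)
    have eq: "ext_within V E r (Suc n) S = (\<Sum>v\<in>V. fitness r S v / T * inn v)"
      using False by (simp add: T_def inn_def)
    have "0 \<le> (\<Sum>v\<in>V. fitness r S v / T * inn v)"
      using inn fp T by (intro sum_nonneg mult_nonneg_nonneg) (auto intro: less_imp_le)
    moreover have "(\<Sum>v\<in>V. fitness r S v / T * inn v) \<le> (\<Sum>v\<in>V. fitness r S v / T)"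
      using inn fp T by (intro sum_mono mult_left_le) (auto intro: less_imp_le)
    moreover have "(\<Sum>v\<in>V. fitness r S v / T) = 1"
      using T by (simp add: sum_divide_distrib[symmetric] T_def total_fitness_def)
    ultimately show ?thesis using eq by simp
  qed
qed

lemma step_singleton:
  assumes "finite V" "x \<in> V" "r > 0" "\<And>v. finite (out_nbrs E v)"
  shows "ext_within V E r (Suc n) {x} \<ge>
     ((\<Sum>v\<in>V-{x}. if (v,x) \<in> E then 1 / real (card (out_nbrs E v)) else 0)
       + (real (card V) - 1 - (\<Sum>v\<in>V-{x}. if (v,x) \<in> E then 1 / real (card (out_nbrs E v)) else 0))
          * ext_within V E r n {x}) / (r + real (card V) - 1)"
proof -
  define d where "d = (\<Sum>v\<in>V-{x}. if (v,x) \<in> E then 1 / real (card (out_nbrs E v)) else 0)"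
  define a where "a = ext_within V E r n {x}"
  define e where "e v = (if (v,x) \<in> E then 1 / real (card (out_nbrs E v)) else 0)" for v
  define T where "T = total_fitness V r {x}"
  have cV: "card V \<ge> 1" using assms(1,2) by (metis One_nat_def Suc_leI card_gt_0_iff empty_iff)
  have Tv: "T = r + real (card V) - 1"
  proof -
    have "T = fitness r {x} x + (\<Sum>v\<in>V-{x}. fitness r {x} v)"
      unfolding T_def total_fitness_def using assms(1,2) by (simp add: sum.remove)
    also have "(\<Sum>v\<in>V-{x}. fitness r {x} v) = (\<Sum>v\<in>V-{x}. 1)"
      by (intro sum.cong) (auto simp: fitness_def)
    finally show ?thesis using assms(1,2) cV by (simp add: fitness_def card_Diff_singleton of_nat_diff)
  qed
  have T: "T > 0" unfolding T_def using tf_pos assms by blast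
  define inn where "inn v = (if out_nbrs E v = {} then ext_within V E r n {x}
            else (\<Sum>w\<in>out_nbrs E v. ext_within V E r n (moran_update {x} v w)
                    / real (card (out_nbrs E v))))" for v
  have bnd: "0 \<le> ext_within V E r n S \<and> ext_within V E r n S \<le> 1" for n S
    using ext_bounds[OF assms(1) _ assms(3,4)] assms(2) by blast
  have inn0: "0 \<le> inn v" for v
  proof (cases "out_nbrs E v = {}")
    case True thus ?thesis using bnd by (simp add: inn_def)
  next
    case False
    have "0 \<le> (\<Sum>w\<in>out_nbrs E v. ext_within V E r n (moran_update {x} v w)
                    / real (card (out_nbrs E v)))"
      by (rule conjunct1[OF avg_bounds[OF assms(4)]]) (rule bnd)
    thus ?thesis using False by (simp add: inn_def)
  qed
  have inn_eq: "inn v = e v + (1 - e v) * a" if "v \<noteq> x" for v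
  proof (cases "out_nbrs E v = {}")
    case True
    hence "(v,x) \<notin> E" by (auto simp: out_nbrs_def)
    thus ?thesis using True by (simp add: inn_def e_def a_def)
  next
    case False
    define Ov where "Ov = out_nbrs E v"
    have fin: "finite Ov" using assms(4) Ov_def by simp
    have cpos: "card Ov > 0" using False fin Ov_def by (simp add: card_gt_0_iff)
    have upd: "moran_update {x} v w = {x} - {w}" for w using that by (simp add: moran_update_def)
    have "inn v = (\<Sum>w\<in>Ov. ext_within V E r n ({x} - {w}) / real (card Ov))"
      using False by (simp add: inn_def Ov_def upd)
    also have "\<dots> = e v + (1 - e v) * a"
    proof (cases "x \<in> Ov")
      case True
      have ev: "e v = 1 / real (card Ov)" using True by (simp add: e_def Ov_def out_nbrs_def)
      have "(\<Sum>w\<in>Ov. ext_within V E r n ({x} - {w}) / real (card Ov))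
          = ext_within V E r n ({x} - {x}) / real (card Ov) + (\<Sum>w\<in>Ov-{x}. ext_within V E r n ({x} - {w}) / real (card Ov))"
        using True fin by (simp add: sum.remove)
      also have "(\<Sum>w\<in>Ov-{x}. ext_within V E r n ({x} - {w}) / real (card Ov)) = (\<Sum>w\<in>Ov-{x}. a / real (card Ov))"
        by (intro sum.cong) (auto simp: a_def)
      also have "\<dots> = (real (card Ov) - 1) * a / real (card Ov)"
        using True fin cpos by (simp add: card_Diff_singleton of_nat_diff)
      finally have S: "(\<Sum>w\<in>Ov. ext_within V E r n ({x} - {w}) / real (card Ov)) = 1 / real (card Ov) + (real (card Ov) - 1) * a / real (card Ov)"
        by simp
      have "1 / real (card Ov) + (real (card Ov) - 1) * a / real (card Ov) = 1 / real (card Ov) + (1 - 1 / real (card Ov)) * a"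
        using cpos by (simp add: field_simps)
      thus ?thesis using S ev by simp
    next
      case False
      have ev: "e v = 0" using False by (simp add: e_def Ov_def out_nbrs_def)
      have "(\<Sum>w\<in>Ov. ext_within V E r n ({x} - {w}) / real (card Ov)) = (\<Sum>w\<in>Ov. a / real (card Ov))"
      proof (intro sum.cong refl)
        fix w assume "w \<in> Ov"
        hence "{x} - {w} = {x}" using False by auto
        thus "ext_within V E r n ({x} - {w}) / real (card Ov) = a / real (card Ov)" by (simp add: a_def)
      qed
      thus ?thesis using cpos ev by simp
    qed
    finally show ?thesis .
  qed
  have eq: "ext_within V E r (Suc n) {x} = (\<Sum>v\<in>V. fitness r {x} v / T * inn v)"
    by (simp add: T_def inn_def)
  also have "\<dots> = fitness r {x} x / T * inn x + (\<Sum>v\<in>V-{x}. fitness r {x} v / T * inn v)"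
    using assms(1,2) by (simp add: sum.remove)
  also have "(\<Sum>v\<in>V-{x}. fitness r {x} v / T * inn v) = (\<Sum>v\<in>V-{x}. (a + e v * (1 - a)) / T)"
    using T by (intro sum.cong) (auto simp: fitness_def inn_eq field_simps)
  also have "\<dots> = ((real (card V) - 1) * a + d * (1 - a)) / T"
    using assms(1,2) cV
    by (simp add: sum_divide_distrib[symmetric] sum.distrib sum_distrib_right[symmetric] d_def e_def card_Diff_singleton of_nat_diff)
  finally have "ext_within V E r (Suc n) {x} \<ge> ((real (card V) - 1) * a + d * (1 - a)) / T"
    using inn0 T assms(3) by (simp add: fitness_def)
  thus ?thesis by (simp add: Tv d_def[symmetric] a_def[symmetric] algebra_simps)
qed

declare ext_within.simps(2)[simp del]

lemma singleton_ext_lower: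
  assumes "finite V" "x \<in> V" "r > 0" "\<And>v. finite (out_nbrs E v)"
  shows "extinction_prob V E r {x} \<ge>
     (\<Sum>v\<in>V-{x}. if (v,x) \<in> E then 1 / real (card (out_nbrs E v)) else 0) /
     ((\<Sum>v\<in>V-{x}. if (v,x) \<in> E then 1 / real (card (out_nbrs E v)) else 0) + r)"
proof -
  define d where "d = (\<Sum>v\<in>V-{x}. if (v,x) \<in> E then 1 / real (card (out_nbrs E v)) else 0)"
  define N where "N = real (card V)"
  have cV: "card V \<ge> 1" using assms(1,2) by (metis One_nat_def Suc_leI card_gt_0_iff empty_iff)
  have d0: "0 \<le> d" unfolding d_def by (intro sum_nonneg) auto
  have "d \<le> (\<Sum>v\<in>V-{x}. 1)" unfolding d_def
  proof (intro sum_mono)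
    fix v assume "v \<in> V - {x}"
    show "(if (v,x) \<in> E then 1 / real (card (out_nbrs E v)) else 0) \<le> 1"
    proof (cases "(v,x) \<in> E")
      case True
      hence "x \<in> out_nbrs E v" by (simp add: out_nbrs_def)
      hence "card (out_nbrs E v) \<ge> 1" using assms(4)[of v]
        by (metis One_nat_def Suc_leI card_gt_0_iff empty_iff)
      thus ?thesis using True by simp
    qed simp
  qed
  hence dN: "d \<le> N - 1" using assms(1,2) cV by (simp add: N_def card_Diff_singleton of_nat_diff)
  define s where "s = (N - 1 - d) / (r + N - 1)"
  define q where "q = d / (d + r)"
  have N1: "N \<ge> 1" using cV by (simp add: N_def)
  have s0: "0 \<le> s" using dN N1 assms(3) by (simp add: s_def)
  have s1: "s < 1" using dN N1 assms(3) d0 by (simp add: s_def divide_less_eq_1)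
  have bnd: "0 \<le> ext_within V E r n S \<and> ext_within V E r n S \<le> 1" for n S
    using ext_bounds[OF assms(1) _ assms(3,4)] assms(2) by blast
  have key: "ext_within V E r n {x} \<ge> q * (1 - s ^ n)" for n
  proof (induction n)
    case 0 show ?case by simp
  next
    case (Suc n)
    define a where "a = ext_within V E r n {x}"
    have h1: "ext_within V E r (Suc n) {x} \<ge> (d + (N - 1 - d) * a) / (r + N - 1)"
      using step_singleton[OF assms, of n] by (simp add: d_def N_def a_def)
    have h2: "(d + (N - 1 - d) * a) / (r + N - 1) = d / (r + N - 1) + s * a"
      by (simp add: s_def add_divide_distrib)
    have h3: "s * a \<ge> s * (q * (1 - s ^ n))"
      using Suc.IH s0 by (intro mult_left_mono) (auto simp: a_def)
    have h4: "d / (r + N - 1) + s * (q * (1 - s ^ n)) = q * (1 - s ^ Suc n)"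
    proof -
      have D: "r + N - 1 > 0" "d + r > 0" using N1 assms(3) d0 by auto
      have "1 - s = (d + r) / (r + N - 1)" using D by (simp add: s_def field_simps)
      hence "d / (r + N - 1) = q * (1 - s)"
        using D by (simp add: q_def)
      thus ?thesis by (simp add: algebra_simps)
    qed
    show ?case using h1 h2 h3 h4 by linarith
  qed
  have bdd: "bdd_above (range (\<lambda>n. ext_within V E r n {x}))"
    using bnd by (intro bdd_aboveI[where M=1]) auto
  have lim: "(\<lambda>n. q * (1 - s ^ n)) \<longlonglongrightarrow> q * (1 - 0)"
    using s0 s1 by (intro tendsto_intros LIMSEQ_power_zero) simp
  have "q \<le> extinction_prob V E r {x}"
  proof -
    have "q * (1 - 0) \<le> extinction_prob V E r {x}"
    proof (rule LIMSEQ_le_const2[OF lim])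
      show "\<exists>N. \<forall>n\<ge>N. q * (1 - s ^ n) \<le> extinction_prob V E r {x}"
      proof (intro exI allI impI)
        fix n :: nat
        have "ext_within V E r n {x} \<le> extinction_prob V E r {x}"
          unfolding extinction_prob_def by (rule cSUP_upper[OF _ bdd]) simp
        thus "q * (1 - s ^ n) \<le> extinction_prob V E r {x}" using key[of n] by linarith
      qed
    qed
    thus ?thesis by simp
  qed
  thus ?thesis by (simp add: q_def d_def)
qed

lemma mf_part_eq: "mf_part m i j = (\<lambda>t. (i, j, t)) ` {..<m ^ i}"
  by (auto simp: mf_part_def)

lemma mf_part_card: "card (mf_part m i j) = m ^ i" and mf_part_fin: "finite (mf_part m i j)"
  by (auto simp: mf_part_eq card_image inj_on_def)

lemma mf_level_fin: "finite (mf_level l m i)"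
  by (auto simp: mf_level_def mf_part_fin)

lemma mf_level_card: "card (mf_level l m i) = l * m ^ i"
proof -
  have "card (mf_level l m i) = (\<Sum>j\<in>{1..l}. card (mf_part m i j))"
    unfolding mf_level_def
    by (rule card_UN_disjoint) (auto simp: mf_part_fin mf_part_def)
  thus ?thesis by (simp add: mf_part_card)
qed

lemma mf_V_fin: "finite (metafunnel_V k l m)"
  by (auto simp: metafunnel_V_def mf_level_fin)

lemma mf_E_fin: "finite (metafunnel_E k l m)"
  by (auto simp: metafunnel_E_def mf_level_fin mf_part_fin)

lemma out_fin: "finite (out_nbrs (metafunnel_E k l m) v)"
proof -
  have "out_nbrs (metafunnel_E k l m) v \<subseteq> snd ` metafunnel_E k l m"
    by (auto simp: out_nbrs_def image_iff) (metis snd_conv)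
  thus ?thesis using mf_E_fin by (metis finite_imageI finite_subset)
qed

lemma out_level1:
  assumes "t < m" "k \<ge> 2" "1 \<le> j" "j \<le> l"
  shows "out_nbrs (metafunnel_E k l m) (1, j, t) = {(0, 0, 0)}"
proof
  show "out_nbrs (metafunnel_E k l m) (1, j, t) \<subseteq> {(0, 0, 0)}"
    using assms by (auto simp: out_nbrs_def metafunnel_E_def mf_level_def mf_part_def)
  have "((1, j, t), (0,0,0)) \<in> mf_level l m 1 \<times> {(0, 0, 0)}"
    using assms by (auto simp: mf_level_def mf_part_def)
  thus "{(0, 0, 0)} \<subseteq> out_nbrs (metafunnel_E k l m) (1, j, t)"
    unfolding out_nbrs_def metafunnel_E_def by blast
qed

lemma out_upper:
  assumes "1 \<le> i" "i + 1 \<le> k" "1 \<le> j" "j \<le> l" "t < m ^ (i + 1)"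
  shows "out_nbrs (metafunnel_E k l m) (i + 1, j, t) = mf_part m i j"
proof
  show "out_nbrs (metafunnel_E k l m) (i + 1, j, t) \<subseteq> mf_part m i j"
    using assms by (auto simp: out_nbrs_def metafunnel_E_def mf_level_def mf_part_def)
  show "mf_part m i j \<subseteq> out_nbrs (metafunnel_E k l m) (i + 1, j, t)"
  proof
    fix w assume w: "w \<in> mf_part m i j"
    have "((i + 1, j, t), w) \<in> mf_part m (i + 1) j \<times> mf_part m i j"
      using w assms by (auto simp: mf_part_def)
    moreover have "i \<in> {1..k-1}" "j \<in> {1..l}" using assms by auto
    ultimately show "w \<in> out_nbrs (metafunnel_E k l m) (i + 1, j, t)"
      unfolding out_nbrs_def metafunnel_E_def by blast
  qed
qed

lemma d_lower_gen:
  assumes "finite V" "P \<subseteq> V - {x}" "c > 0"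
    "\<And>v. v \<in> P \<Longrightarrow> (v, x) \<in> E \<and> card (out_nbrs E v) = c"
  shows "real (card P) / real c \<le>
     (\<Sum>v\<in>V-{x}. if (v,x) \<in> E then 1 / real (card (out_nbrs E v)) else 0)"
proof -
  have "real (card P) / real c = (\<Sum>v\<in>P. if (v,x) \<in> E then 1 / real (card (out_nbrs E v)) else 0)"
    using assms(4) by (simp add: sum_divide_distrib[symmetric])
  also have "\<dots> \<le> (\<Sum>v\<in>V-{x}. if (v,x) \<in> E then 1 / real (card (out_nbrs E v)) else 0)"
    using assms(1,2) by (intro sum_mono2) auto
  finally show ?thesis .
qed

lemma mf_d_bound:
  assumes "k \<ge> 2" "l \<ge> 1" "m \<ge> 1" "x \<in> metafunnel_V k l m" "x \<notin> mf_level l m k"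
  shows "real m \<le> (\<Sum>v\<in>metafunnel_V k l m - {x}. if (v,x) \<in> metafunnel_E k l m
            then 1 / real (card (out_nbrs (metafunnel_E k l m) v)) else 0)"
proof (cases "x = (0,0,0)")
  case True
  have "real (card (mf_part m 1 1)) / real 1 \<le> (\<Sum>v\<in>metafunnel_V k l m - {x}. if (v,x) \<in> metafunnel_E k l m
            then 1 / real (card (out_nbrs (metafunnel_E k l m) v)) else 0)"
  proof (rule d_lower_gen[OF mf_V_fin])
    show "mf_part m 1 1 \<subseteq> metafunnel_V k l m - {x}"
      using True assms by (auto simp: metafunnel_V_def mf_level_def mf_part_def)
    fix v assume v: "v \<in> mf_part m 1 1"
    then obtain t where t: "v = (1,1,t)" "t < m" by (auto simp: mf_part_def)
    have "(v, x) \<in> mf_level l m 1 \<times> {(0, 0, 0)}"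
      using v True assms by (auto simp: mf_level_def)
    hence "(v, x) \<in> metafunnel_E k l m" unfolding metafunnel_E_def by blast
    thus "(v, x) \<in> metafunnel_E k l m \<and> card (out_nbrs (metafunnel_E k l m) v) = 1"
      using out_level1[of t m k 1 l] t assms by simp
  qed simp
  thus ?thesis by (simp add: mf_part_card)
next
  case False
  then obtain i where i: "i \<in> {1..k}" "x \<in> mf_level l m i"
    using assms(4) by (auto simp: metafunnel_V_def)
  have ik: "i \<noteq> k" using i assms(5) by auto
  obtain j where j: "j \<in> {1..l}" "x \<in> mf_part m i j" using i by (auto simp: mf_level_def)
  have "real (card (mf_part m (i+1) j)) / real (m ^ i) \<le> (\<Sum>v\<in>metafunnel_V k l m - {x}. if (v,x) \<in> metafunnel_E k l m
            then 1 / real (card (out_nbrs (metafunnel_E k l m) v)) else 0)"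
  proof (rule d_lower_gen[OF mf_V_fin])
    show "mf_part m (i+1) j \<subseteq> metafunnel_V k l m - {x}"
    proof
      fix v assume "v \<in> mf_part m (i+1) j"
      moreover have "i + 1 \<in> {1..k}" using i ik by auto
      ultimately have "v \<in> metafunnel_V k l m" using j unfolding metafunnel_V_def mf_level_def by blast
      moreover have "v \<noteq> x" using \<open>v \<in> mf_part m (i+1) j\<close> j by (auto simp: mf_part_def)
      ultimately show "v \<in> metafunnel_V k l m - {x}" by simp
    qed
    show "m ^ i > 0" using assms by simp
    fix v assume v: "v \<in> mf_part m (i+1) j"
    then obtain t where t: "v = (i+1,j,t)" "t < m ^ (i+1)" by (auto simp: mf_part_def)
    have "(v, x) \<in> mf_part m (i + 1) j \<times> mf_part m i j" using v j by simp
    moreover have "i \<in> {1..k-1}" using i ik by auto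
    ultimately have "(v, x) \<in> metafunnel_E k l m" using j unfolding metafunnel_E_def by blast
    moreover have "out_nbrs (metafunnel_E k l m) v = mf_part m i j"
      using out_upper[of i k j l t m] t i ik j by auto
    ultimately show "(v, x) \<in> metafunnel_E k l m \<and> card (out_nbrs (metafunnel_E k l m) v) = m ^ i"
      by (simp add: mf_part_card)
  qed
  moreover have "real (card (mf_part m (i+1) j)) / real (m ^ i) = real m"
    using assms(3) by (simp add: mf_part_card)
  ultimately show ?thesis by simp
qed

lemma ext_prob_nonneg:
  assumes "finite V" "V \<noteq> {}" "r > 0" "\<And>v. finite (out_nbrs E v)"
  shows "0 \<le> extinction_prob V E r S"
proof -
  have bnd: "0 \<le> ext_within V E r n S \<and> ext_within V E r n S \<le> 1" for n
    using ext_bounds[OF assms] by blast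
  have bdd: "bdd_above (range (\<lambda>n. ext_within V E r n S))"
    using bnd by (intro bdd_aboveI[where M=1]) auto
  have "ext_within V E r 0 S \<le> extinction_prob V E r S"
    unfolding extinction_prob_def by (rule cSUP_upper[OF _ bdd]) simp
  thus ?thesis using bnd[of 0] by linarith
qed

theorem lemma5p2:
  fixes r :: real and k l m :: nat
  assumes "r > 1" and "k \<ge> 2" and "l \<ge> 1" and "m \<ge> 1"
  shows "uniform_extinction_prob (metafunnel_V k l m) (metafunnel_E k l m) r
           \<ge> 1 / (2 * (real m + r))"
proof -
  define V where "V = metafunnel_V k l m"
  define E where "E = metafunnel_E k l m"
  define L where "L = mf_level l m k"
  define A where "A = V - L"
  have r0: "r > 0" using assms by simp
  have finV: "finite V" by (simp add: V_def mf_V_fin)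
  have LV: "L \<subseteq> V" using assms unfolding L_def V_def metafunnel_V_def by auto
  have L1A: "mf_level l m (k-1) \<subseteq> A"
  proof
    fix v assume v: "v \<in> mf_level l m (k-1)"
    have "k - 1 \<in> {1..k}" using assms by auto
    hence "v \<in> V" using v unfolding V_def metafunnel_V_def by blast
    moreover have "v \<notin> L" using v assms by (auto simp: L_def mf_level_def mf_part_def)
    ultimately show "v \<in> A" by (simp add: A_def)
  qed
  have finA: "finite A" using finV by (simp add: A_def)
  have cA1: "l * m ^ (k-1) \<le> card A"
    using card_mono[OF finA L1A] by (simp add: mf_level_card)
  have cL: "card L = m * (l * m ^ (k-1))"
  proof -
    have "m ^ k = m * m ^ (k-1)" using assms(2) by (metis Suc_diff_1 less_le_trans pos2 power_Suc)
    thus ?thesis by (simp add: L_def mf_level_card)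
  qed
  have cV: "card V = card A + card L"
    using card_Diff_subset[OF finite_subset[OF LV finV] LV] card_mono[OF finV LV]
    by (simp add: A_def)
  have cVle: "real (card V) \<le> 2 * real m * real (card A)"
  proof -
    have "card L \<le> m * card A" using cL cA1 by simp
    hence "card V \<le> card A + m * card A" using cV by simp
    also have "\<dots> \<le> 2 * m * card A" using assms(4) by (simp add: mult_right_mono)
    finally have "card V \<le> 2 * m * card A" .
    thus ?thesis by (metis of_nat_le_iff of_nat_mult of_nat_numeral)
  qed
  have Vne: "V \<noteq> {}" unfolding V_def metafunnel_V_def by auto
  have cVpos: "real (card V) > 0" using finV Vne by (simp add: card_gt_0_iff)
  have nonneg: "0 \<le> extinction_prob V E r {x}" for x
    using ext_prob_nonneg[OF finV Vne r0] out_fin by (simp add: E_def)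
  have lowA: "real m / (real m + r) \<le> extinction_prob V E r {x}" if x: "x \<in> A" for x
  proof -
    define d where "d = (\<Sum>v\<in>V-{x}. if (v,x) \<in> E then 1 / real (card (out_nbrs E v)) else 0)"
    have dm: "real m \<le> d" unfolding d_def V_def E_def
      using mf_d_bound[OF assms(2,3,4)] x by (simp add: A_def V_def L_def)
    have "d / (d + r) \<le> extinction_prob V E r {x}"
    proof -
      have xV: "x \<in> V" using x by (simp add: A_def)
      show ?thesis unfolding d_def E_def by (rule singleton_ext_lower[OF finV xV r0 out_fin])
    qed
    moreover have "real m / (real m + r) \<le> d / (d + r)"
      using dm r0 by (simp add: frac_le_eq divide_simps) (simp add: algebra_simps mult_right_mono)
    ultimately show ?thesis by linarith
  qed
  have "(\<Sum>x\<in>A. real m / (real m + r)) \<le> (\<Sum>x\<in>A. extinction_prob V E r {x})"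
    using lowA by (intro sum_mono) auto
  also have "\<dots> \<le> (\<Sum>x\<in>V. extinction_prob V E r {x})"
    using finV nonneg by (intro sum_mono2) (auto simp: A_def)
  finally have S: "real (card A) * (real m / (real m + r)) \<le> (\<Sum>x\<in>V. extinction_prob V E r {x})"
    by simp
  have "1 / (2 * (real m + r)) \<le> real (card A) * (real m / (real m + r)) / real (card V)"
  proof -
    have "1 / (2 * (real m + r)) * real (card V) \<le> 1 / (2 * (real m + r)) * (2 * real m * real (card A))"
      using cVle r0 by (intro mult_left_mono) auto
    also have "\<dots> = real (card A) * (real m / (real m + r))" using r0 by (simp add: field_simps)
    finally show ?thesis by (subst pos_le_divide_eq[OF cVpos])
  qed
  also have "\<dots> \<le> (\<Sum>x\<in>V. extinction_prob V E r {x}) / real (card V)"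
    using divide_right_mono[OF S, of "real (card V)"] cVpos by linarith
  finally show ?thesis by (simp add: uniform_extinction_prob_def V_def E_def)
qed

end
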